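(* Let $G=(V,E)$ be a finite simple undirected graph, $k\ge1$ an integer, $S\subseteq V$ a $k$-plex, and $C\subseteq V$ with $C\cap S=\emptyset$. Let $v\in C$. Initialize $\mathrm{sup}(w)=k-|\overline{N}_w(S)|$ for each $w\in S$ and $D=N(v)\cap C$. Process the vertices $u\in N(v)\cap C$ one at a time in an arbitrary order; when processing $u$: if $\overline{N}_u(S)=\emptyset$, keep $u$ in $D$; otherwise choose $w\in\overline{N}_u(S)$ with $\mathrm{sup}(w)\le \mathrm{sup}(w')$ for all $w'\in\overline{N}_u(S)$ (ties broken arbitrarily), and if $\mathrm{sup}(w)>0$ decrease $\mathrm{sup}(w)$ by $1$ (keeping $u$ in $D$), while if $\mathrm{sup}(w)\le 0$ remove $u$ from $D$. Let $D$ be the resulting set after all vertices have been processed. Then every $k$-plex $S'$ with $S\cup\{v\}\subseteq S'\subseteq S\cup C$ satisfies $$|S'|\le |S|+k-|\overline{N}_v(S)|+|D|.$$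
   Context: $N(x)$ denotes the set of neighbors of $x$ in $G$ ($x\notin N(x)$). For $x\in V$ and $T\subseteq V$, $\overline{N}_x(T)=T\setminus N(x)$ is the set of non-neighbors of $x$ in $T$; if $x\in T$ then $x\in\overline{N}_x(T)$. A set $T\subseteq V$ is a $k$-plex if every vertex $u\in T$ satisfies $|N(u)\cap T|\ge |T|-k$ (equivalently $|\overline{N}_u(T)|\le k$). *)

theory Defs
  imports Main
begin

definition simple_graph :: "'a set \<Rightarrow> ('a \<Rightarrow> 'a \<Rightarrow> bool) \<Rightarrow> bool" where
  "simple_graph V E \<longleftrightarrow> finite V \<and> (\<forall>x y. E x y \<longrightarrow> x \<in> V \<and> y \<in> V)
     \<and> (\<forall>x y. E x y \<longrightarrow> E y x) \<and> (\<forall>x. \<not> E x x)"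

definition nbhd :: "'a set \<Rightarrow> ('a \<Rightarrow> 'a \<Rightarrow> bool) \<Rightarrow> 'a \<Rightarrow> 'a set" where
  "nbhd V E x = {y \<in> V. E x y}"

text \<open>non-neighbours of x in T (contains x itself if x is in T)\<close>
definition non_nbrs :: "'a set \<Rightarrow> ('a \<Rightarrow> 'a \<Rightarrow> bool) \<Rightarrow> 'a \<Rightarrow> 'a set \<Rightarrow> 'a set" where
  "non_nbrs V E x T = T - nbhd V E x"

definition is_kplex :: "'a set \<Rightarrow> ('a \<Rightarrow> 'a \<Rightarrow> bool) \<Rightarrow> nat \<Rightarrow> 'a set \<Rightarrow> bool" where
  "is_kplex V E k T \<longleftrightarrow> T \<subseteq> V \<and> (\<forall>u\<in>T. card (non_nbrs V E u T) \<le> k)"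

text \<open>Ties in the choice
 of w are resolved arbitrarily, which is captured by the existential choice of w.\<close>
inductive sup_process :: "'a set \<Rightarrow> ('a \<Rightarrow> 'a \<Rightarrow> bool) \<Rightarrow> 'a set \<Rightarrow>
    ('a \<Rightarrow> int) \<Rightarrow> 'a set \<Rightarrow> 'a list \<Rightarrow> ('a \<Rightarrow> int) \<Rightarrow> 'a set \<Rightarrow> bool"
  for V E S where
  finish: "sup_process V E S sp D [] sp D"
| keep_empty: "non_nbrs V E u S = {} \<Longrightarrow> sup_process V E S sp D us sp' D'
     \<Longrightarrow> sup_process V E S sp D (u # us) sp' D'"
| decrease: "w \<in> non_nbrs V E u S \<Longrightarrow> (\<forall>w'\<in>non_nbrs V E u S. sp w \<le> sp w') \<Longrightarrow> sp w > 0
     \<Longrightarrow> sup_process V E S (sp(w := sp w - 1)) D us sp' D'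
     \<Longrightarrow> sup_process V E S sp D (u # us) sp' D'"
| remove: "w \<in> non_nbrs V E u S \<Longrightarrow> (\<forall>w'\<in>non_nbrs V E u S. sp w \<le> sp w') \<Longrightarrow> sp w \<le> 0
     \<Longrightarrow> sup_process V E S sp (D - {u}) us sp' D'
     \<Longrightarrow> sup_process V E S sp D (u # us) sp' D'"

end

theory Submission
  imports Defs
begin

lemma sp_mono: "sup_process V E S sp D L sp' D' \<Longrightarrow> D' \<subseteq> D"
  by (induction rule: sup_process.induct) auto

lemma sp_keep: "sup_process V E S sp D L sp' D' \<Longrightarrow> x \<in> D \<Longrightarrow> x \<notin> set L \<Longrightarrow> x \<in> D'"
  by (induction rule: sup_process.induct) auto

lemma sp_main:
  assumes "sup_process V E S sp D L sp' D'"
  shows "distinct L \<Longrightarrow> set L \<subseteq> D \<Longrightarrow> A \<subseteq> set L \<Longrightarrow>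
    (\<forall>w\<in>S. int (card {x\<in>A. w \<in> non_nbrs V E x S}) \<le> sp w) \<Longrightarrow> card A \<le> card (D' \<inter> set L)"
  using assms
proof (induction arbitrary: A rule: sup_process.induct)
  case (finish sp D)
  then show ?case by simp
next
  case (keep_empty u sp D us sp' D')
  have uD: "u \<in> D'" using sp_keep[OF keep_empty.hyps(2)] keep_empty.prems by auto
  have "card (A - {u}) \<le> card (D' \<inter> set us)"
    apply (rule keep_empty.IH)
    using keep_empty.prems apply auto[3]
    using keep_empty.prems(4)
    apply (intro ballI)
    subgoal for w
      apply (drule bspec, assumption)
      apply (erule order_trans[rotated])
      using finite_subset[OF keep_empty.prems(3) finite_set] by (auto intro!: card_mono)
    done
  moreover have "card (D' \<inter> set (u # us)) = Suc (card (D' \<inter> set us))"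
    using uD keep_empty.prems(1) by (simp add: Int_insert_right)
  moreover have "card A \<le> Suc (card (A - {u}))"
  proof (cases "u \<in> A")
    case True
    have "finite A" using finite_subset[OF keep_empty.prems(3) finite_set] .
    then show ?thesis using True card_Suc_Diff1 by (metis order_refl)
  next
    case False
    then show ?thesis by simp
  qed
  ultimately show ?case by linarith
next
  case (decrease w u sp D us sp' D')
  have uD: "u \<in> D'" using sp_keep[OF decrease.hyps(4)] decrease.prems by auto
  have finA: "finite A" using decrease.prems(3) finite_subset by blast
  have c2: "card (D' \<inter> set (u # us)) = Suc (card (D' \<inter> set us))"
    using uD decrease.prems(1) by (simp add: Int_insert_right)
  have wS: "w \<in> S" using decrease.hyps(1) unfolding non_nbrs_def by auto
  show ?case
  proof (cases "u \<in> A")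
    case True
    have "card (A - {u}) \<le> card (D' \<inter> set us)"
    proof (rule decrease.IH)
      show "distinct us" "set us \<subseteq> D" "A - {u} \<subseteq> set us" using decrease.prems by auto
      show "\<forall>w'\<in>S. int (card {x \<in> A - {u}. w' \<in> non_nbrs V E x S}) \<le> (sp(w := sp w - 1)) w'"
      proof
        fix w' assume "w' \<in> S"
        have le: "int (card {x \<in> A. w' \<in> non_nbrs V E x S}) \<le> sp w'" using decrease.prems(4) \<open>w' \<in> S\<close> by auto
        show "int (card {x \<in> A - {u}. w' \<in> non_nbrs V E x S}) \<le> (sp(w := sp w - 1)) w'"
        proof (cases "w' = w")
          case True
          have "{x \<in> A - {u}. w' \<in> non_nbrs V E x S} = {x \<in> A. w' \<in> non_nbrs V E x S} - {u}" by auto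
          moreover have "u \<in> {x \<in> A. w' \<in> non_nbrs V E x S}" using \<open>u \<in> A\<close> True decrease.hyps(1) by auto
          moreover have "finite {x \<in> A. w' \<in> non_nbrs V E x S}" using finA by auto
          ultimately have "card {x \<in> A - {u}. w' \<in> non_nbrs V E x S} = card {x \<in> A. w' \<in> non_nbrs V E x S} - 1"
            by simp
          moreover have "card {x \<in> A. w' \<in> non_nbrs V E x S} > 0"
            using \<open>u \<in> {x \<in> A. w' \<in> non_nbrs V E x S}\<close> \<open>finite {x \<in> A. w' \<in> non_nbrs V E x S}\<close>
            using card_gt_0_iff by blast
          ultimately show ?thesis using le True by simp
        next
          case False
          have "card {x \<in> A - {u}. w' \<in> non_nbrs V E x S} \<le> card {x \<in> A. w' \<in> non_nbrs V E x S}"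
            using finA by (auto intro!: card_mono)
          then show ?thesis using le False by simp
        qed
      qed
    qed
    moreover have "card A = Suc (card (A - {u}))" using True finA
      by (metis card_Suc_Diff1)
    ultimately show ?thesis using c2 by simp
  next
    case False
    have AS: "A \<subseteq> set us" using False decrease.prems(3) by auto
    define M where "M = {x \<in> A. w \<in> non_nbrs V E x S}"
    have finM: "finite M" using finA M_def by auto
    show ?thesis
    proof (cases "int (card M) \<le> sp w - 1")
      case True
      have "card A \<le> card (D' \<inter> set us)"
      proof (rule decrease.IH)
        show "distinct us" "set us \<subseteq> D" "A \<subseteq> set us" using decrease.prems AS by auto
        show "\<forall>w'\<in>S. int (card {x \<in> A. w' \<in> non_nbrs V E x S}) \<le> (sp(w := sp w - 1)) w'"
          using True decrease.prems(4) M_def by auto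
      qed
      then show ?thesis using c2 by simp
    next
      case F2: False
      have "card M > 0" using F2 decrease.hyps(3) by linarith
      then have "M \<noteq> {}" by (metis card.empty less_irrefl)
      then obtain y where yM: "y \<in> M" by blast
      have "card (A - {y}) \<le> card (D' \<inter> set us)"
      proof (rule decrease.IH)
        show "distinct us" "set us \<subseteq> D" "A - {y} \<subseteq> set us" using decrease.prems AS by auto
        show "\<forall>w'\<in>S. int (card {x \<in> A - {y}. w' \<in> non_nbrs V E x S}) \<le> (sp(w := sp w - 1)) w'"
        proof
          fix w' assume "w' \<in> S"
          have le: "int (card {x \<in> A. w' \<in> non_nbrs V E x S}) \<le> sp w'" using decrease.prems(4) \<open>w' \<in> S\<close> by auto
          show "int (card {x \<in> A - {y}. w' \<in> non_nbrs V E x S}) \<le> (sp(w := sp w - 1)) w'"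
          proof (cases "w' = w")
            case True
            have "{x \<in> A - {y}. w' \<in> non_nbrs V E x S} = M - {y}" using True M_def by auto
            then have "card {x \<in> A - {y}. w' \<in> non_nbrs V E x S} = card M - 1" using yM finM by simp
            then show ?thesis using le True M_def \<open>card M > 0\<close> by simp
          next
            case False
            have "card {x \<in> A - {y}. w' \<in> non_nbrs V E x S} \<le> card {x \<in> A. w' \<in> non_nbrs V E x S}"
              using finA by (auto intro!: card_mono)
            then show ?thesis using le False by simp
          qed
        qed
      qed
      moreover have "card A = Suc (card (A - {y}))" using yM M_def finA
        by (metis (no_types, lifting) card_Suc_Diff1 mem_Collect_eq)
      ultimately show ?thesis using c2 by simp
    qed
  qed
next
  case (remove w u sp D us sp' D')
  have finA: "finite A" using remove.prems(3) finite_subset by blast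
  have wS: "w \<in> S" using remove.hyps(1) unfolding non_nbrs_def by auto
  have "u \<notin> A"
  proof
    assume "u \<in> A"
    then have "u \<in> {x \<in> A. w \<in> non_nbrs V E x S}" using remove.hyps(1) by auto
    then have "card {x \<in> A. w \<in> non_nbrs V E x S} > 0" using finA card_gt_0_iff by fastforce
    moreover have "int (card {x \<in> A. w \<in> non_nbrs V E x S}) \<le> sp w" using remove.prems(4) wS by auto
    ultimately show False using remove.hyps(3) by linarith
  qed
  have "card A \<le> card (D' \<inter> set us)"
  proof (rule remove.IH)
    show "distinct us" "set us \<subseteq> D - {u}" "A \<subseteq> set us" using remove.prems \<open>u \<notin> A\<close> by auto
    show "\<forall>w\<in>S. int (card {x \<in> A. w \<in> non_nbrs V E x S}) \<le> sp w" using remove.prems by auto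
  qed
  moreover have "card (D' \<inter> set us) \<le> card (D' \<inter> set (u # us))"
    by (rule card_mono) auto
  ultimately show ?case by simp
qed

theorem lemma6:
  fixes V :: "'a set" and E :: "'a \<Rightarrow> 'a \<Rightarrow> bool" and k :: nat
    and S C D :: "'a set" and v :: 'a and us :: "'a list" and sp' :: "'a \<Rightarrow> int"
  assumes "simple_graph V E"
    and "k \<ge> 1"
    and "is_kplex V E k S"
    and "C \<subseteq> V" and "C \<inter> S = {}"
    and "v \<in> C"
    and "distinct us" and "set us = nbhd V E v \<inter> C"
    and "sup_process V E S (\<lambda>w. int k - int (card (non_nbrs V E w S)))
           (nbhd V E v \<inter> C) us sp' D"
  shows "\<forall>S'. is_kplex V E k S' \<and> insert v S \<subseteq> S' \<and> S' \<subseteq> S \<union> C \<longrightarrow>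
     int (card S') \<le> int (card S) + int k - int (card (non_nbrs V E v S)) + int (card D)"
proof (intro allI impI)
  fix S' assume H: "is_kplex V E k S' \<and> insert v S \<subseteq> S' \<and> S' \<subseteq> S \<union> C"
  have G: "finite V" "\<And>x y. E x y \<Longrightarrow> E y x" "\<And>x. \<not> E x x" "\<And>x y. E x y \<Longrightarrow> x \<in> V \<and> y \<in> V"
    using assms(1) unfolding simple_graph_def by auto
  have S'V: "S' \<subseteq> V" using H unfolding is_kplex_def by auto
  have finS': "finite S'" using S'V G(1) finite_subset by blast
  have SV: "S \<subseteq> V" using assms(3) unfolding is_kplex_def by auto
  have finS: "finite S" using SV G(1) finite_subset by blast
  define A where "A = S' \<inter> (nbhd V E v \<inter> C)"
  define B where "B = (S' \<inter> C) - {v} - nbhd V E v"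
  have vS: "v \<notin> S" using assms(5,6) by auto
  have decomp: "S' = S \<union> ({v} \<union> (A \<union> B))" using H unfolding A_def B_def by auto
  have finA: "finite A" "finite B" using finS' A_def B_def by auto
  have vA: "v \<notin> A" using G(3) unfolding A_def nbhd_def by auto
  have vB: "v \<notin> B" "A \<inter> B = {}" "S \<inter> ({v} \<union> (A \<union> B)) = {}"
    using assms(5) vS unfolding A_def B_def by auto
  have cardS': "card S' = card S + (1 + (card A + card B))"
  proof -
    have "card (A \<union> B) = card A + card B" using finA vB by (simp add: card_Un_disjoint)
    moreover have "card ({v} \<union> (A \<union> B)) = 1 + card (A \<union> B)" using finA vA vB by simp
    moreover have "card S' = card S + card ({v} \<union> (A \<union> B))"
      proof -
        have "finite ({v} \<union> (A \<union> B))" using finA by simp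
        then show ?thesis using card_Un_disjoint[OF finS _ vB(3)] decomp by metis
      qed
    ultimately show ?thesis by simp
  qed
  have nv: "non_nbrs V E v S' = insert v (non_nbrs V E v S \<union> B)"
    using H G(3) unfolding non_nbrs_def nbhd_def B_def by auto
  have "card (non_nbrs V E v S') \<le> k" using H unfolding is_kplex_def by auto
  moreover have "card (non_nbrs V E v S') = 1 + (card (non_nbrs V E v S) + card B)"
  proof -
    have f1: "finite (non_nbrs V E v S)" using finS unfolding non_nbrs_def by simp
    have d1: "non_nbrs V E v S \<inter> B = {}" using assms(5) unfolding non_nbrs_def B_def by blast
    have d2: "v \<notin> non_nbrs V E v S \<union> B" using vS vB(1) unfolding non_nbrs_def by blast
    have "card (non_nbrs V E v S \<union> B) = card (non_nbrs V E v S) + card B"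
      using f1 finA(2) d1 by (rule card_Un_disjoint)
    moreover have "card (insert v (non_nbrs V E v S \<union> B)) = Suc (card (non_nbrs V E v S \<union> B))"
      using f1 finA(2) d2 by simp
    ultimately show ?thesis unfolding nv by simp
  qed
  ultimately have kb: "1 + card (non_nbrs V E v S) + card B \<le> k" by simp
  have finD0: "finite (nbhd V E v \<inter> C)" using G(1) unfolding nbhd_def by auto
  have DD: "D \<subseteq> nbhd V E v \<inter> C" using sp_mono[OF assms(9)] .
  have "card A \<le> card (D \<inter> set us)"
  proof (rule sp_main[OF assms(9) assms(7)])
    show "set us \<subseteq> nbhd V E v \<inter> C" using assms(8) by simp
    show "A \<subseteq> set us" using assms(8) A_def by auto
    show "\<forall>w\<in>S. int (card {x \<in> A. w \<in> non_nbrs V E x S}) \<le> int k - int (card (non_nbrs V E w S))"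
    proof
      fix w assume wS: "w \<in> S"
      have sub: "{x \<in> A. w \<in> non_nbrs V E x S} \<union> non_nbrs V E w S \<subseteq> non_nbrs V E w S'"
        using H G(2) SV unfolding A_def non_nbrs_def nbhd_def by auto
      have disj: "{x \<in> A. w \<in> non_nbrs V E x S} \<inter> non_nbrs V E w S = {}"
        using assms(5) unfolding A_def non_nbrs_def by auto
      have "card ({x \<in> A. w \<in> non_nbrs V E x S} \<union> non_nbrs V E w S) \<le> card (non_nbrs V E w S')"
        using sub finS' unfolding non_nbrs_def by (intro card_mono) auto
      also have "\<dots> \<le> k" using H wS unfolding is_kplex_def by auto
      finally have U: "card ({x \<in> A. w \<in> non_nbrs V E x S} \<union> non_nbrs V E w S) \<le> k" .
      have "card {x \<in> A. w \<in> non_nbrs V E x S} + card (non_nbrs V E w S) \<le> k"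
      proof -
        have "finite {x \<in> A. w \<in> non_nbrs V E x S}" using finA(1) by simp
        moreover have "finite (non_nbrs V E w S)" using finS unfolding non_nbrs_def by simp
        ultimately have "card ({x \<in> A. w \<in> non_nbrs V E x S} \<union> non_nbrs V E w S) = card {x \<in> A. w \<in> non_nbrs V E x S} + card (non_nbrs V E w S)"
          using disj by (rule card_Un_disjoint)
        with U show ?thesis by simp
      qed
      then show "int (card {x \<in> A. w \<in> non_nbrs V E x S}) \<le> int k - int (card (non_nbrs V E w S))"
        by linarith
    qed
  qed
  also have "\<dots> \<le> card D" using DD finite_subset[OF DD finD0] by (intro card_mono) auto
  finally have "card A \<le> card D" .
  then show "int (card S') \<le> int (card S) + int k - int (card (non_nbrs V E v S)) + int (card D)"
    using cardS' kb by linarith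
qed

end
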